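(* Let $k\geq1$, $a_1,\dots,a_k\in\mathbb{R}\setminus\{0\}$ and real exponents $\alpha_1<\cdots<\alpha_k$. Then $f:(0,\infty)\to\mathbb{R}$, $f(x)=\sum_{i=1}^k a_ix^{\alpha_i}$, is amenable.
   Context: Relative distance on $\mathbb{R}$: $\mathrm{dist}(x,y)=0$ if $x=y=0$, $\mathrm{dist}(x,y)=|\log(y/x)|$ if $xy>0$, and $\mathrm{dist}(x,y)=\infty$ otherwise. For a real analytic function $f$ on an open set $\Omega\subseteq\mathbb{R}$, not identically zero, the condition number is $\kappa(f,x)=0$ if $x=0$, $\kappa(f,x)=\infty$ if $x\neq0$ and $f(x)=0$, and $\kappa(f,x)=|x|\,|f'(x)|/|f(x)|$ otherwise; $\mu(f,x)=1+\kappa(f,x)$. $f:\Omega\to\mathbb{R}$ is amenable if there is $C>0$ such that for every $x\in\Omega$ with $\kappa(f,x)<\infty$, the set $B_x=\{y\in\mathbb{R}:\mathrm{dist}(y,x)<1/(C\mu(f,x))\}$ is contained in $\Omega$ and $\mu(f,y)\leq C\mu(f,x)$ for all $y\in B_x$. *)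

theory Defs
  imports "HOL-Analysis.Analysis"
begin

definition reldist :: "real \<Rightarrow> real \<Rightarrow> ereal" where
  "reldist x y = (if x = 0 \<and> y = 0 then 0
                  else if x * y > 0 then ereal \<bar>ln (y / x)\<bar>
                  else \<infinity>)"

definition kappa :: "(real \<Rightarrow> real) \<Rightarrow> real \<Rightarrow> ereal" where
  "kappa f x = (if x = 0 then 0
                else if f x = 0 then \<infinity>
                else ereal (\<bar>x\<bar> * \<bar>deriv f x\<bar> / \<bar>f x\<bar>))"

definition mu :: "(real \<Rightarrow> real) \<Rightarrow> real \<Rightarrow> ereal" where
  "mu f x = 1 + kappa f x"

definition amenable :: "real set \<Rightarrow> (real \<Rightarrow> real) \<Rightarrow> bool" where
  "amenable \<Omega> f \<longleftrightarrow> (\<exists>C::real > 0. \<forall>x\<in>\<Omega>. kappa f x < \<infinity> \<longrightarrow>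
      (let B = {y. reldist y x < ereal (1 / (C * real_of_ereal (mu f x)))} in
         B \<subseteq> \<Omega> \<and> (\<forall>y\<in>B. mu f y \<le> ereal C * mu f x)))"

end

theory Submission
  imports Defs "HOL-Real_Asymp.Real_Asymp" "HOL-Complex_Analysis.Complex_Analysis"
begin


definition goodC :: "(real \<Rightarrow> real) \<Rightarrow> (real \<Rightarrow> real) \<Rightarrow> real \<Rightarrow> real \<Rightarrow> bool" where
  "goodC g gd C t \<longleftrightarrow> (g t \<noteq> 0 \<longrightarrow> (\<forall>s. \<bar>s - t\<bar> < 1 / (C * (1 + \<bar>gd t / g t\<bar>)) \<longrightarrow>
      g s \<noteq> 0 \<and> 1 + \<bar>gd s / g s\<bar> \<le> C * (1 + \<bar>gd t / g t\<bar>)))"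

lemma goodC_mono:
  assumes "goodC g gd C t" "0 < C" "C \<le> C'"
  shows "goodC g gd C' t"
  unfolding goodC_def
proof (intro impI allI)
  fix s assume gt: "g t \<noteq> 0" and s: "\<bar>s - t\<bar> < 1 / (C' * (1 + \<bar>gd t / g t\<bar>))"
  define W where "W = 1 + \<bar>gd t / g t\<bar>"
  have W: "W \<ge> 1" unfolding W_def by simp
  have "1 / (C' * W) \<le> 1 / (C * W)"
    using W assms(2,3) by (intro divide_left_mono mult_right_mono mult_pos_pos) auto
  then have "\<bar>s - t\<bar> < 1 / (C * W)" using s unfolding W_def by simp
  then have "g s \<noteq> 0 \<and> 1 + \<bar>gd s / g s\<bar> \<le> C * W"
    using assms(1) gt unfolding goodC_def W_def by blast
  moreover have "C * W \<le> C' * W" using W assms(3) by (intro mult_right_mono) auto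
  ultimately show "g s \<noteq> 0 \<and> 1 + \<bar>gd s / g s\<bar> \<le> C' * (1 + \<bar>gd t / g t\<bar>)"
    unfolding W_def by linarith
qed

lemma goodC_local:
  fixes g gd :: "real \<Rightarrow> real" and m :: nat
  assumes \<delta>: "\<delta> > 0" and B: "B \<ge> 0" and gz: "m > 0 \<longrightarrow> g z = 0"
    and H: "\<And>s. \<bar>s - z\<bar> < \<delta> \<Longrightarrow> (s = z \<longrightarrow> m = 0) \<Longrightarrow>
              g s \<noteq> 0 \<and> \<bar>gd s / g s - real m / (s - z)\<bar> \<le> B"
  shows "\<exists>\<epsilon>>0. \<exists>C>0. \<forall>t. \<bar>t - z\<bar> < \<epsilon> \<longrightarrow> goodC g gd C t"
proof (cases "m = 0")
  case True
  define C where "C = 5 + B + 2 / \<delta>"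
  have Cpos: "C > 0" unfolding C_def using B \<delta> by (simp add: add_pos_nonneg)
  have "\<forall>t. \<bar>t - z\<bar> < \<delta>/2 \<longrightarrow> goodC g gd C t"
    unfolding goodC_def
  proof (intro allI impI)
    fix t s assume t: "\<bar>t - z\<bar> < \<delta>/2" and gt: "g t \<noteq> 0"
      and s: "\<bar>s - t\<bar> < 1 / (C * (1 + \<bar>gd t / g t\<bar>))"
    define W where "W = 1 + \<bar>gd t / g t\<bar>"
    have W: "W \<ge> 1" unfolding W_def by simp
    have "1 / (C * W) \<le> 1 / C"
      using W Cpos by (simp add: divide_le_eq)
    also have "1 / C \<le> \<delta> / 2"
    proof -
      have "2 / \<delta> \<le> C" unfolding C_def using B by simp
      then show ?thesis using \<delta> Cpos by (simp add: field_simps)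
    qed
    finally have "\<bar>s - z\<bar> < \<delta>" using s t unfolding W_def by linarith
    from H[OF this] True have hs: "g s \<noteq> 0" "\<bar>gd s / g s\<bar> \<le> B" by auto
    have "C \<le> C * W" using W Cpos by simp
    moreover have "1 + B \<le> C" unfolding C_def using \<delta> by simp
    ultimately show "g s \<noteq> 0 \<and> 1 + \<bar>gd s / g s\<bar> \<le> C * (1 + \<bar>gd t / g t\<bar>)"
      using hs unfolding W_def by linarith
  qed
  then show ?thesis using Cpos \<delta> by (intro exI[of _ "\<delta>/2"]) auto
next
  case False
  then have m: "real m \<ge> 1" by simp
  define C where "C = 5 + B + 2 / \<delta>"
  have Cpos: "C \<ge> 5 + B" unfolding C_def using \<delta> by simp
  define \<epsilon> where "\<epsilon> = min (\<delta>/2) (real m / (2 * B + 2))"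
  have \<epsilon>: "\<epsilon> > 0" unfolding \<epsilon>_def using \<delta> B m by auto
  have "\<forall>t. \<bar>t - z\<bar> < \<epsilon> \<longrightarrow> goodC g gd C t"
    unfolding goodC_def
  proof (intro allI impI)
    fix t s assume t: "\<bar>t - z\<bar> < \<epsilon>" and gt: "g t \<noteq> 0"
      and s: "\<bar>s - t\<bar> < 1 / (C * (1 + \<bar>gd t / g t\<bar>))"
    define W where "W = 1 + \<bar>gd t / g t\<bar>"
    define d where "d = \<bar>t - z\<bar>"
    have W: "W \<ge> 1" unfolding W_def by simp
    have tz: "t \<noteq> z" using gt gz False by auto
    have d: "d > 0" using tz unfolding d_def by simp
    have dd: "d < \<delta>/2" "d \<le> real m / (2 * B + 2)" using t unfolding d_def \<epsilon>_def by auto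
    have Ht: "\<bar>gd t / g t - real m / (t - z)\<bar> \<le> B" using H[of t] dd d tz unfolding d_def by auto
    have "\<bar>real m / (t - z)\<bar> = real m / d" unfolding d_def by simp
    then have "\<bar>gd t / g t\<bar> \<ge> real m / d - B" using Ht by linarith
    moreover have "B \<le> real m / (2 * d)"
    proof -
      have "d * (2 * B + 2) \<le> real m" using dd(2) B by (simp add: field_simps)
      then have "2 * d * B \<le> real m" using d by (simp add: algebra_simps)
      then show ?thesis using d by (simp add: field_simps)
    qed
    ultimately have Wd: "W \<ge> real m / (2 * d)" unfolding W_def by (simp add: field_simps)
    have Wd': "W * (2 * d) \<ge> real m" using Wd d by (simp add: field_simps)
    have r: "1 / (C * W) \<le> d / 2"
    proof -
      have "C * W * d \<ge> 5 * W * d" using Cpos B W d by (intro mult_right_mono) auto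
      moreover have "5 * W * d \<ge> 2" using Wd' m by linarith
      ultimately have "C * W * d \<ge> 2" by linarith
      then show ?thesis using Cpos W B by (simp add: field_simps)
    qed
    have tri: "\<bar>t - z\<bar> \<le> \<bar>s - z\<bar> + \<bar>s - t\<bar>" "\<bar>s - z\<bar> \<le> \<bar>t - z\<bar> + \<bar>s - t\<bar>" by arith+
    have sz1: "\<bar>s - z\<bar> > d / 2" using s r tri unfolding W_def d_def by linarith
    have sz2: "\<bar>s - z\<bar> < \<delta>" using s r dd tri unfolding W_def d_def by linarith
    have sz: "s \<noteq> z" using sz1 d by auto
    from H[OF sz2] sz have hs: "g s \<noteq> 0" "\<bar>gd s / g s - real m / (s - z)\<bar> \<le> B" by auto
    have "\<bar>real m / (s - z)\<bar> = real m / \<bar>s - z\<bar>" by simp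
    also have "\<dots> \<le> real m / (d / 2)" using sz1 d m sz by (intro divide_left_mono) (auto intro!: mult_pos_pos)
    also have "\<dots> = 4 * (real m / (2 * d))" by simp
    also have "\<dots> \<le> 4 * W" using Wd by simp
    finally have "\<bar>gd s / g s\<bar> \<le> B + 4 * W" using hs(2) by linarith
    moreover have "1 + B \<le> (1 + B) * W" using W B by simp
    moreover have "(5 + B) * W \<le> C * W" using Cpos W by (intro mult_right_mono) auto
    moreover have "(1 + B) * W + 4 * W = (5 + B) * W" by (simp add: algebra_simps)
    ultimately have "1 + \<bar>gd s / g s\<bar> \<le> C * W" by linarith
    then show "g s \<noteq> 0 \<and> 1 + \<bar>gd s / g s\<bar> \<le> C * (1 + \<bar>gd t / g t\<bar>)"
      using hs(1) unfolding W_def by simp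
  qed
  moreover have "C > 0" using Cpos B by linarith
  ultimately show ?thesis using \<epsilon> by blast
qed

lemma goodC_global:
  fixes g gd :: "real \<Rightarrow> real"
  assumes loc: "\<And>z. \<exists>\<delta>>0. \<exists>m::nat. \<exists>B. (m > 0 \<longrightarrow> g z = 0) \<and>
      (\<forall>s. \<bar>s - z\<bar> < \<delta> \<and> (s = z \<longrightarrow> m = 0) \<longrightarrow> g s \<noteq> 0 \<and> \<bar>gd s / g s - real m / (s - z)\<bar> \<le> B)"
    and inf: "\<exists>T M. \<forall>s. \<bar>s\<bar> \<ge> T \<longrightarrow> g s \<noteq> 0 \<and> \<bar>gd s / g s\<bar> \<le> M"
  shows "\<exists>C>0. \<forall>t. goodC g gd C t"
proof -
  have "\<forall>z. \<exists>\<epsilon>>0. \<exists>C>0. \<forall>t. \<bar>t - z\<bar> < \<epsilon> \<longrightarrow> goodC g gd C t"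
  proof
    fix z
    obtain \<delta> m B where \<delta>: "\<delta> > 0" and gz: "m > 0 \<longrightarrow> g z = 0" and
      H: "\<forall>s. \<bar>s - z\<bar> < \<delta> \<and> (s = z \<longrightarrow> m = 0) \<longrightarrow> g s \<noteq> 0 \<and> \<bar>gd s / g s - real m / (s - z)\<bar> \<le> B"
      using loc[of z] by blast
    have B: "\<bar>B\<bar> \<ge> 0" by simp
    show "\<exists>\<epsilon>>0. \<exists>C>0. \<forall>t. \<bar>t - z\<bar> < \<epsilon> \<longrightarrow> goodC g gd C t"
      by (rule goodC_local[where g=g and gd=gd and z=z and m=m, OF \<delta> B gz]) (use H in force)
  qed
  then obtain E where E1: "\<forall>z. E z > 0 \<and> (\<exists>C>0. \<forall>t. \<bar>t - z\<bar> < E z \<longrightarrow> goodC g gd C t)"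
    by (rule choice[THEN exE])
  then obtain Cf where E2: "\<forall>z. Cf z > 0 \<and> (\<forall>t. \<bar>t - z\<bar> < E z \<longrightarrow> goodC g gd (Cf z) t)"
    using choice[of "\<lambda>z C. C > 0 \<and> (\<forall>t. \<bar>t - z\<bar> < E z \<longrightarrow> goodC g gd C t)"] by blast
  have E: "\<And>z. E z > 0" and Cf: "\<And>z. Cf z > 0"
    and EC: "\<And>z t. \<bar>t - z\<bar> < E z \<Longrightarrow> goodC g gd (Cf z) t" using E1 E2 by auto
  obtain T M where TM: "\<And>s. \<bar>s\<bar> \<ge> T \<Longrightarrow> g s \<noteq> 0 \<and> \<bar>gd s / g s\<bar> \<le> M" using inf by blast
  define Ci where "Ci = 2 + \<bar>M\<bar>"
  have Ci: "Ci > 0" unfolding Ci_def by simp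
  have ginf: "goodC g gd Ci t" if t: "\<bar>t\<bar> \<ge> \<bar>T\<bar> + 1" for t
    unfolding goodC_def
  proof (intro impI allI)
    fix s assume gt: "g t \<noteq> 0" and s: "\<bar>s - t\<bar> < 1 / (Ci * (1 + \<bar>gd t / g t\<bar>))"
    define W where "W = 1 + \<bar>gd t / g t\<bar>"
    have W: "W \<ge> 1" unfolding W_def by simp
    have "1 / (Ci * W) \<le> 1 / Ci" using W Ci by (simp add: divide_le_eq)
    also have "\<dots> \<le> 1" using Ci unfolding Ci_def by simp
    finally have "\<bar>s - t\<bar> < 1" using s unfolding W_def by simp
    then have "\<bar>s\<bar> \<ge> T" using t by arith
    from TM[OF this] have hs: "g s \<noteq> 0" "\<bar>gd s / g s\<bar> \<le> M" by auto
    have "Ci \<le> Ci * W" using W Ci by simp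
    then show "g s \<noteq> 0 \<and> 1 + \<bar>gd s / g s\<bar> \<le> Ci * (1 + \<bar>gd t / g t\<bar>)"
      using hs unfolding Ci_def W_def by linarith
  qed
  define K where "K = {-(\<bar>T\<bar> + 1) .. \<bar>T\<bar> + 1}"
  have cK: "compact K" unfolding K_def by simp
  have cov: "K \<subseteq> (\<Union>z\<in>K. ball z (E z))" using E by (auto simp: dist_real_def)
  obtain Z where Z: "Z \<subseteq> K" "finite Z" "K \<subseteq> (\<Union>z\<in>Z. ball z (E z))"
    using compactE_image[OF cK _ cov] by (metis open_ball)
  define C where "C = Ci + (\<Sum>z\<in>Z. Cf z)"
  have sumnn: "(\<Sum>z\<in>Z. Cf z) \<ge> 0" using Cf by (simp add: sum_nonneg less_imp_le)
  have Cpos: "C > 0" unfolding C_def using Ci sumnn by linarith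
  have "goodC g gd C t" for t
  proof (cases "\<bar>t\<bar> \<ge> \<bar>T\<bar> + 1")
    case True
    show ?thesis using sumnn unfolding C_def
      by (intro goodC_mono[OF ginf[OF True] Ci]) simp
  next
    case False
    then have "t \<in> K" unfolding K_def by auto
    then obtain z where z: "z \<in> Z" "dist z t < E z" using Z(3) by auto
    then have "\<bar>t - z\<bar> < E z" by (simp add: dist_real_def abs_minus_commute)
    from EC[OF this] have "goodC g gd (Cf z) t" .
    moreover have "Cf z \<le> (\<Sum>z\<in>Z. Cf z)"
      using z(1) Z(2) Cf by (intro member_le_sum) (auto intro: less_imp_le)
    ultimately show ?thesis using Cf[of z] Ci unfolding C_def
      by (metis goodC_mono add.commute add_increasing2 less_imp_le)
  qed
  then show ?thesis using Cpos by blast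
qed



definition es :: "nat set \<Rightarrow> (nat \<Rightarrow> real) \<Rightarrow> (nat \<Rightarrow> real) \<Rightarrow> real \<Rightarrow> real" where
  "es I b \<alpha> t = (\<Sum>i\<in>I. b i * exp (\<alpha> i * t))"

lemma es_deriv: "(es I b \<alpha> has_real_derivative es I (\<lambda>i. b i * \<alpha> i) \<alpha> t) (at t)"
  unfolding es_def
  by (auto intro!: derivative_eq_intros sum.cong simp: algebra_simps)

lemma es_reflect: "es I b \<alpha> (- s) = es I b (\<lambda>i. - \<alpha> i) s"
  unfolding es_def by simp

lemma es_lim_top:
  assumes I: "finite I" and j: "j \<in> I" and lt: "\<And>i. i \<in> I \<Longrightarrow> i \<noteq> j \<Longrightarrow> \<alpha> i < \<alpha> j"
  shows "((\<lambda>s. es I b \<alpha> s * exp (- \<alpha> j * s)) \<longlongrightarrow> b j) at_top"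
proof -
  have eq: "es I b \<alpha> s * exp (- \<alpha> j * s) = (\<Sum>i\<in>I. b i * exp ((\<alpha> i - \<alpha> j) * s))" for s
    unfolding es_def sum_distrib_right
    by (intro sum.cong) (auto simp: algebra_simps simp flip: exp_add)
  have "((\<lambda>s. \<Sum>i\<in>I. b i * exp ((\<alpha> i - \<alpha> j) * s)) \<longlongrightarrow> (\<Sum>i\<in>I. if i = j then b j else 0)) at_top"
  proof (rule tendsto_sum)
    fix i assume i: "i \<in> I"
    show "((\<lambda>s. b i * exp ((\<alpha> i - \<alpha> j) * s)) \<longlongrightarrow> (if i = j then b j else 0)) at_top"
    proof (cases "i = j")
      case True then show ?thesis by simp
    next
      case False
      then have c: "\<alpha> i - \<alpha> j < 0" using lt[OF i] by simp
      define c where "c = \<alpha> i - \<alpha> j"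
      have "((\<lambda>s. b i * exp (c * s)) \<longlongrightarrow> 0) at_top" using c unfolding c_def by real_asymp
      then show ?thesis using False unfolding c_def by simp
    qed
  qed
  then show ?thesis using I j unfolding eq by (simp add: sum.delta)
qed

lemma es_bound_top:
  assumes I: "finite I" and j: "j \<in> I" and aj: "a j \<noteq> 0"
    and lt: "\<And>i. i \<in> I \<Longrightarrow> i \<noteq> j \<Longrightarrow> \<alpha> i < \<alpha> j"
  shows "\<exists>N M. \<forall>s\<ge>N. es I a \<alpha> s \<noteq> 0 \<and> \<bar>es I (\<lambda>i. a i * \<alpha> i) \<alpha> s / es I a \<alpha> s\<bar> \<le> M"
proof -
  have l1: "((\<lambda>s. \<bar>es I a \<alpha> s * exp (- \<alpha> j * s)\<bar>) \<longlongrightarrow> \<bar>a j\<bar>) at_top"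
    by (intro tendsto_rabs es_lim_top[where \<alpha>=\<alpha>, OF I j lt])
  have l2: "((\<lambda>s. \<bar>es I (\<lambda>i. a i * \<alpha> i) \<alpha> s * exp (- \<alpha> j * s)\<bar>) \<longlongrightarrow> \<bar>a j * \<alpha> j\<bar>) at_top"
    by (intro tendsto_rabs es_lim_top[where \<alpha>=\<alpha>, OF I j lt])
  have "eventually (\<lambda>s. \<bar>es I a \<alpha> s * exp (- \<alpha> j * s)\<bar> > \<bar>a j\<bar> / 2) at_top"
    using order_tendstoD(1)[OF l1, of "\<bar>a j\<bar> / 2"] aj by simp
  moreover have "eventually (\<lambda>s. \<bar>es I (\<lambda>i. a i * \<alpha> i) \<alpha> s * exp (- \<alpha> j * s)\<bar> < \<bar>a j * \<alpha> j\<bar> + 1) at_top"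
    using order_tendstoD(2)[OF l2] by simp
  ultimately have "eventually (\<lambda>s. \<bar>es I a \<alpha> s * exp (- \<alpha> j * s)\<bar> > \<bar>a j\<bar> / 2 \<and>
      \<bar>es I (\<lambda>i. a i * \<alpha> i) \<alpha> s * exp (- \<alpha> j * s)\<bar> < \<bar>a j * \<alpha> j\<bar> + 1) at_top"
    by (rule eventually_conj)
  then obtain N where N: "\<And>s. s \<ge> N \<Longrightarrow> \<bar>es I a \<alpha> s * exp (- \<alpha> j * s)\<bar> > \<bar>a j\<bar> / 2 \<and>
      \<bar>es I (\<lambda>i. a i * \<alpha> i) \<alpha> s * exp (- \<alpha> j * s)\<bar> < \<bar>a j * \<alpha> j\<bar> + 1"
    unfolding eventually_at_top_linorder by blast
  define M where "M = (\<bar>a j * \<alpha> j\<bar> + 1) / (\<bar>a j\<bar> / 2)"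
  have "es I a \<alpha> s \<noteq> 0 \<and> \<bar>es I (\<lambda>i. a i * \<alpha> i) \<alpha> s / es I a \<alpha> s\<bar> \<le> M" if s: "s \<ge> N" for s
  proof -
    define E where "E = exp (- \<alpha> j * s)"
    define P where "P = es I a \<alpha> s"
    define Q where "Q = es I (\<lambda>i. a i * \<alpha> i) \<alpha> s"
    have E: "E > 0" unfolding E_def by simp
    have h1: "\<bar>P * E\<bar> > \<bar>a j\<bar> / 2" and h2: "\<bar>Q * E\<bar> < \<bar>a j * \<alpha> j\<bar> + 1"
      using N[OF s] unfolding E_def P_def Q_def by auto
    have P0: "P \<noteq> 0" using h1 by auto
    have "\<bar>Q / P\<bar> = \<bar>Q * E\<bar> / \<bar>P * E\<bar>" using E P0 by (simp add: abs_mult)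
    also have "\<dots> \<le> (\<bar>a j * \<alpha> j\<bar> + 1) / (\<bar>a j\<bar> / 2)"
      using h1 h2 aj by (intro frac_le) auto
    finally show ?thesis using P0 unfolding P_def Q_def M_def by simp
  qed
  then show ?thesis by blast
qed



definition ES :: "nat set \<Rightarrow> (nat \<Rightarrow> real) \<Rightarrow> (nat \<Rightarrow> real) \<Rightarrow> complex \<Rightarrow> complex" where
  "ES I b \<alpha> w = (\<Sum>i\<in>I. complex_of_real (b i) * exp (complex_of_real (\<alpha> i) * w))"

lemma ES_deriv: "(ES I b \<alpha> has_field_derivative ES I (\<lambda>i. b i * \<alpha> i) \<alpha> w) (at w)"
  unfolding ES_def
  by (auto intro!: derivative_eq_intros sum.cong simp: algebra_simps)

lemma ES_holo: "ES I b \<alpha> holomorphic_on S"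
  using ES_deriv by (meson field_differentiable_def holomorphic_on_def field_differentiable_at_within)

lemma ES_real: "ES I b \<alpha> (complex_of_real t) = complex_of_real (es I b \<alpha> t)"
  unfolding ES_def es_def of_real_sum
  by (intro sum.cong refl) (metis exp_of_real of_real_mult)

lemma es_local:
  assumes I: "finite I" and nz: "es I a \<alpha> t0 \<noteq> 0"
  shows "\<exists>\<delta>>0. \<exists>m::nat. \<exists>B. (m > 0 \<longrightarrow> es I a \<alpha> z = 0) \<and>
      (\<forall>s. \<bar>s - z\<bar> < \<delta> \<and> (s = z \<longrightarrow> m = 0) \<longrightarrow> es I a \<alpha> s \<noteq> 0 \<and>
         \<bar>es I (\<lambda>i. a i * \<alpha> i) \<alpha> s / es I a \<alpha> s - real m / (s - z)\<bar> \<le> B)"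
proof -
  define F where "F = ES I a \<alpha>"
  define F' where "F' = ES I (\<lambda>i. a i * \<alpha> i) \<alpha>"
  define zc where "zc = complex_of_real z"
  define n where "n = zorder F zc"
  define U where "U = zor_poly F zc"
  have ex: "\<exists>w\<in>UNIV. F w \<noteq> 0"
    using nz ES_real[of I a \<alpha> t0] unfolding F_def by (intro bexI[of _ "complex_of_real t0"]) auto
  have zz: "(if F zc = 0 then n > 0 else n = 0) \<and> (\<exists>r. r>0 \<and> cball zc r \<subseteq> UNIV \<and>
      U holomorphic_on cball zc r \<and> (\<forall>w\<in>cball zc r. F w = U w * (w-zc)^nat n \<and> U w \<noteq> 0))"
    unfolding n_def U_def by (rule zorder_exist_zero[OF _ _ _ _ ex]) (auto simp: F_def ES_holo)
  then have nF: "if F zc = 0 then n > 0 else n = 0" by blast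
  from zz obtain r where r: "r > 0"
    and Uh: "U holomorphic_on cball zc r"
    and fac: "\<And>w. w \<in> cball zc r \<Longrightarrow> F w = U w * (w - zc) ^ nat n \<and> U w \<noteq> 0"
    by blast
  define m where "m = nat n"
  have m0: "m > 0 \<longrightarrow> es I a \<alpha> z = 0"
    using nF ES_real[of I a \<alpha> z] unfolding m_def F_def zc_def by (auto split: if_splits)
  have Uh': "U holomorphic_on ball zc r" using Uh by (rule holomorphic_on_subset) auto
  have dU: "(U has_field_derivative deriv U w) (at w)" if "w \<in> ball zc r" for w
    using holomorphic_derivI[OF Uh' open_ball that] .
  have key: "F' w = deriv U w * (w - zc) ^ m + U w * (of_nat m * (w - zc) ^ (m - 1))"
    if w: "w \<in> ball zc r" for w
  proof -
    have d1: "((\<lambda>w. U w * (w - zc) ^ m) has_field_derivative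
        deriv U w * (w - zc) ^ m + U w * (of_nat m * (w - zc) ^ (m - 1))) (at w)"
      by (rule derivative_eq_intros dU[OF w] | simp)+
    have d2: "((\<lambda>w. U w * (w - zc) ^ m) has_field_derivative F' w) (at w)"
      using has_field_derivative_transform_within_open[OF ES_deriv[of I a \<alpha> w] open_ball w]
        fac unfolding F_def F'_def m_def by auto
    show ?thesis using DERIV_unique[OF d2 d1] .
  qed
  have ratio: "F' w / F w = deriv U w / U w + of_nat m / (w - zc)"
    if w: "w \<in> ball zc r" and wz: "w = zc \<longrightarrow> m = 0" for w
  proof (cases "m = 0")
    case True
    then show ?thesis using key[OF w] fac[of w] w unfolding m_def by auto
  next
    case False
    then have wzc: "w - zc \<noteq> 0" using wz by auto
    have pw: "(w - zc) ^ m = (w - zc) ^ (m - 1) * (w - zc)" using False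
      by (metis Suc_pred' neq0_conv power_Suc2)
    have Uw: "U w \<noteq> 0" using fac[of w] w by auto
    have Fw: "F w = U w * (w - zc) ^ (m - 1) * (w - zc)" using fac[of w] w pw unfolding m_def by auto
    have "F' w = deriv U w * (w - zc) ^ (m - 1) * (w - zc) + U w * (of_nat m * (w - zc) ^ (m - 1))"
      using key[OF w] pw by simp
    moreover have "(deriv U w * (w - zc) ^ (m - 1) * (w - zc) + U w * (of_nat m * (w - zc) ^ (m - 1)))
        / (U w * (w - zc) ^ (m - 1) * (w - zc)) = deriv U w / U w + of_nat m / (w - zc)"
      using Uw wzc by (simp add: field_simps)
    ultimately show ?thesis using Fw by simp
  qed
  have cont: "continuous_on (cball zc (r/2)) (\<lambda>w. deriv U w / U w)"
  proof -
    have sub: "cball zc (r/2) \<subseteq> ball zc r" using r by (auto simp: subset_iff)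
    have "continuous_on (ball zc r) (deriv U)"
      by (intro holomorphic_on_imp_continuous_on holomorphic_deriv Uh') simp
    moreover have "continuous_on (ball zc r) U"
      by (intro holomorphic_on_imp_continuous_on Uh')
    ultimately have "continuous_on (ball zc r) (\<lambda>w. deriv U w / U w)"
      using fac by (intro continuous_on_divide) auto
    then show ?thesis using sub by (rule continuous_on_subset)
  qed
  have "bounded ((\<lambda>w. deriv U w / U w) ` cball zc (r/2))"
    by (intro compact_imp_bounded compact_continuous_image cont compact_cball)
  then obtain B where B: "\<And>w. w \<in> cball zc (r/2) \<Longrightarrow> norm (deriv U w / U w) \<le> B"
    unfolding bounded_iff by (auto simp del: mem_cball)
  have "\<forall>s. \<bar>s - z\<bar> < r/2 \<and> (s = z \<longrightarrow> m = 0) \<longrightarrow> es I a \<alpha> s \<noteq> 0 \<and>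
         \<bar>es I (\<lambda>i. a i * \<alpha> i) \<alpha> s / es I a \<alpha> s - real m / (s - z)\<bar> \<le> B"
  proof (intro allI impI)
    fix s assume s: "\<bar>s - z\<bar> < r/2 \<and> (s = z \<longrightarrow> m = 0)"
    define w where "w = complex_of_real s"
    have dist: "dist zc w = \<bar>s - z\<bar>" unfolding zc_def w_def dist_complex_def
      by (metis norm_of_real of_real_diff abs_minus_commute)
    have wc: "w \<in> cball zc (r/2)" using dist s by simp
    have wb: "w \<in> ball zc r" using dist s r by simp
    have wz: "w = zc \<longrightarrow> m = 0" using s unfolding w_def zc_def by auto
    have Fw: "F w \<noteq> 0"
    proof -
      have "F w = U w * (w - zc) ^ m" using fac[of w] wb unfolding m_def by auto
      moreover have "U w \<noteq> 0" using fac[of w] wb by auto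
      moreover have "(w - zc) ^ m \<noteq> 0" using wz by auto
      ultimately show ?thesis by simp
    qed
    have Fr: "F w = complex_of_real (es I a \<alpha> s)" unfolding F_def w_def by (rule ES_real)
    have F'r: "F' w = complex_of_real (es I (\<lambda>i. a i * \<alpha> i) \<alpha> s)" unfolding F'_def w_def by (rule ES_real)
    have "complex_of_real (es I (\<lambda>i. a i * \<alpha> i) \<alpha> s / es I a \<alpha> s - real m / (s - z))
        = F' w / F w - of_nat m / (w - zc)"
      by (simp add: Fr F'r w_def[symmetric] zc_def[symmetric])
    also have "\<dots> = deriv U w / U w" using ratio[OF wb wz] by simp
    finally have "\<bar>es I (\<lambda>i. a i * \<alpha> i) \<alpha> s / es I a \<alpha> s - real m / (s - z)\<bar> = norm (deriv U w / U w)"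
      by (metis norm_of_real)
    then show "es I a \<alpha> s \<noteq> 0 \<and> \<bar>es I (\<lambda>i. a i * \<alpha> i) \<alpha> s / es I a \<alpha> s - real m / (s - z)\<bar> \<le> B"
      using B[OF wc] Fw Fr by auto
  qed
  then show ?thesis using m0 r by (intro exI[of _ "r/2"]) auto
qed



lemma es_neg: "es I (\<lambda>i. - b i) \<alpha> t = - es I b \<alpha> t"
  unfolding es_def by (simp add: sum_negf)

lemma f_eq:
  assumes "x > 0"
  shows "(\<Sum>i=1..k. a i * x powr \<alpha> i) = es {1..k} a \<alpha> (ln x)"
  using assms unfolding es_def powr_def by (simp add: mult.commute)

lemma f_deriv:
  assumes x: "x > 0"
  shows "deriv (\<lambda>x. \<Sum>i=1..k. a i * x powr \<alpha> i) x = es {1..k} (\<lambda>i. a i * \<alpha> i) \<alpha> (ln x) / x"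
proof -
  have "((\<lambda>x. es {1..k} a \<alpha> (ln x)) has_real_derivative es {1..k} (\<lambda>i. a i * \<alpha> i) \<alpha> (ln x) * (1 / x)) (at x)"
    using DERIV_chain2[OF es_deriv DERIV_ln_divide[OF x]] by simp
  then have "((\<lambda>x. \<Sum>i=1..k. a i * x powr \<alpha> i) has_real_derivative es {1..k} (\<lambda>i. a i * \<alpha> i) \<alpha> (ln x) * (1 / x)) (at x)"
    by (rule has_field_derivative_transform_within_open[where S="{0<..}"]) (use x f_eq in auto)
  then show ?thesis by (simp add: DERIV_imp_deriv)
qed

lemma mu_eq:
  assumes x: "x > 0" and g: "es {1..k} a \<alpha> (ln x) \<noteq> 0"
  shows "mu (\<lambda>x. \<Sum>i=1..k. a i * x powr \<alpha> i) x =
    ereal (1 + \<bar>es {1..k} (\<lambda>i. a i * \<alpha> i) \<alpha> (ln x) / es {1..k} a \<alpha> (ln x)\<bar>)"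
  using x g unfolding mu_def kappa_def f_eq[OF x] f_deriv[OF x]
  by (simp add: abs_divide)

lemma kappa_inf:
  assumes x: "x > 0" and g: "es {1..k} a \<alpha> (ln x) = 0"
  shows "kappa (\<lambda>x. \<Sum>i=1..k. a i * x powr \<alpha> i) x = \<infinity>"
  using x g unfolding kappa_def f_eq[OF x] by simp



theorem mainTheorem8:
  fixes k :: nat and a \<alpha> :: "nat \<Rightarrow> real"
  assumes "k \<ge> 1"
    and "\<forall>i\<in>{1..k}. a i \<noteq> 0"
    and "strict_mono_on {1..k} \<alpha>"
  shows "amenable {0<..} (\<lambda>x. \<Sum>i=1..k. a i * x powr \<alpha> i)"
proof -
  define I where "I = {1..k}"
  define g where "g = es I a \<alpha>"
  define gd where "gd = es I (\<lambda>i. a i * \<alpha> i) \<alpha>"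
  have I: "finite I" "k \<in> I" "1 \<in> I" unfolding I_def using assms(1) by auto
  have sm: "\<And>i j. i \<in> I \<Longrightarrow> j \<in> I \<Longrightarrow> i < j \<Longrightarrow> \<alpha> i < \<alpha> j"
    using assms(3) unfolding I_def strict_mono_on_def by blast
  have ltk: "\<And>i. i \<in> I \<Longrightarrow> i \<noteq> k \<Longrightarrow> \<alpha> i < \<alpha> k"
    using sm I unfolding I_def by (metis atLeastAtMost_iff le_neq_implies_less)
  have lt1: "\<And>i. i \<in> I \<Longrightarrow> i \<noteq> 1 \<Longrightarrow> - \<alpha> i < - \<alpha> 1"
  proof -
    fix i assume "i \<in> I" "i \<noteq> 1"
    then have "1 < i" unfolding I_def by auto
    then show "- \<alpha> i < - \<alpha> 1" using sm[of 1 i] I \<open>i \<in> I\<close> by simp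
  qed
  have ak: "a k \<noteq> 0" "a 1 \<noteq> 0" using assms(2) I unfolding I_def by auto
  have "\<exists>N M. \<forall>s\<ge>N. g s \<noteq> 0 \<and> \<bar>gd s / g s\<bar> \<le> M"
    unfolding g_def gd_def by (rule es_bound_top[where \<alpha>=\<alpha> and a=a, OF I(1) I(2) ak(1) ltk])
  then obtain N1 M1 where NM1: "\<And>s. s \<ge> N1 \<Longrightarrow> g s \<noteq> 0 \<and> \<bar>gd s / g s\<bar> \<le> M1"
    by blast
  have "\<exists>N M. \<forall>s\<ge>N. es I a (\<lambda>i. - \<alpha> i) s \<noteq> 0 \<and>
      \<bar>es I (\<lambda>i. a i * - \<alpha> i) (\<lambda>i. - \<alpha> i) s / es I a (\<lambda>i. - \<alpha> i) s\<bar> \<le> M"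
    by (rule es_bound_top[where \<alpha>="\<lambda>i. - \<alpha> i" and a=a, OF I(1) I(3) ak(2) lt1])
  then obtain N2 M2 where NM2: "\<And>s. s \<ge> N2 \<Longrightarrow> es I a (\<lambda>i. - \<alpha> i) s \<noteq> 0 \<and>
      \<bar>es I (\<lambda>i. a i * - \<alpha> i) (\<lambda>i. - \<alpha> i) s / es I a (\<lambda>i. - \<alpha> i) s\<bar> \<le> M2"
    by blast
  have NM2': "g s \<noteq> 0 \<and> \<bar>gd s / g s\<bar> \<le> M2" if "s \<le> - N2" for s
  proof -
    have "- s \<ge> N2" using that by simp
    from NM2[OF this] have "es I a (\<lambda>i. - \<alpha> i) (- s) \<noteq> 0 \<and>
      \<bar>es I (\<lambda>i. - (a i * \<alpha> i)) (\<lambda>i. - \<alpha> i) (- s) / es I a (\<lambda>i. - \<alpha> i) (- s)\<bar> \<le> M2"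
      by simp
    then show ?thesis unfolding g_def gd_def es_neg es_reflect[symmetric] by simp
  qed
  have inf: "\<exists>T M. \<forall>s. \<bar>s\<bar> \<ge> T \<longrightarrow> g s \<noteq> 0 \<and> \<bar>gd s / g s\<bar> \<le> M"
  proof (intro exI allI impI)
    fix s assume s: "\<bar>s\<bar> \<ge> \<bar>N1\<bar> + \<bar>N2\<bar>"
    show "g s \<noteq> 0 \<and> \<bar>gd s / g s\<bar> \<le> max M1 M2"
    proof (cases "s \<ge> 0")
      case True then have "s \<ge> N1" using s by arith
      then show ?thesis using NM1 by force
    next
      case False then have "s \<le> - N2" using s by arith
      then show ?thesis using NM2' by force
    qed
  qed
  have g0: "g \<bar>N1\<bar> \<noteq> 0" using NM1[of "\<bar>N1\<bar>"] by simp
  have loc: "\<exists>\<delta>>0. \<exists>m::nat. \<exists>B. (m > 0 \<longrightarrow> g z = 0) \<and>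
      (\<forall>s. \<bar>s - z\<bar> < \<delta> \<and> (s = z \<longrightarrow> m = 0) \<longrightarrow> g s \<noteq> 0 \<and> \<bar>gd s / g s - real m / (s - z)\<bar> \<le> B)" for z
    unfolding g_def gd_def by (rule es_local[OF I(1)]) (use g0 g_def in auto)
  obtain C where C: "C > 0" and good: "\<And>t. goodC g gd C t"
    using goodC_global[OF loc inf] by blast
  show ?thesis
    unfolding amenable_def Let_def
  proof (intro exI[of _ C] conjI ballI impI C)
    fix x :: real assume x: "x \<in> {0<..}" and kx: "kappa (\<lambda>x. \<Sum>i=1..k. a i * x powr \<alpha> i) x < \<infinity>"
    then have x0: "x > 0" by simp
    define t where "t = ln x"
    have gt: "g t \<noteq> 0" using kappa_inf[OF x0, of k a \<alpha>] kx unfolding g_def I_def t_def by auto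
    define W where "W = 1 + \<bar>gd t / g t\<bar>"
    have W: "W \<ge> 1" unfolding W_def by simp
    have mux: "mu (\<lambda>x. \<Sum>i=1..k. a i * x powr \<alpha> i) x = ereal W"
      using mu_eq[OF x0, of k a \<alpha>] gt unfolding W_def g_def gd_def I_def t_def by simp
    have memB: "y > 0 \<and> \<bar>ln y - t\<bar> < 1 / (C * W)"
      if y: "reldist y x < ereal (1 / (C * real_of_ereal (mu (\<lambda>x. \<Sum>i=1..k. a i * x powr \<alpha> i) x)))" for y
    proof -
      have yx: "y * x > 0"
      proof (rule ccontr)
        assume "\<not> y * x > 0"
        then have "reldist y x = \<infinity>" unfolding reldist_def using x0 by auto
        then show False using y by simp
      qed
      then have y0: "y > 0" using x0 by (simp add: zero_less_mult_iff)
      have "reldist y x = ereal \<bar>ln (x / y)\<bar>" unfolding reldist_def using x0 yx by auto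
      then have "\<bar>ln (x / y)\<bar> < 1 / (C * W)" using y mux by simp
      moreover have "ln (x / y) = t - ln y" unfolding t_def using x0 y0 by (simp add: ln_div)
      ultimately show ?thesis using y0 by (simp add: abs_minus_commute)
    qed
    show "{y. reldist y x < ereal (1 / (C * real_of_ereal (mu (\<lambda>x. \<Sum>i=1..k. a i * x powr \<alpha> i) x)))} \<subseteq> {0<..}"
      using memB by auto
    fix y assume "y \<in> {y. reldist y x < ereal (1 / (C * real_of_ereal (mu (\<lambda>x. \<Sum>i=1..k. a i * x powr \<alpha> i) x)))}"
      then have yy: "y > 0" "\<bar>ln y - t\<bar> < 1 / (C * W)" using memB by auto
      have "g (ln y) \<noteq> 0 \<and> 1 + \<bar>gd (ln y) / g (ln y)\<bar> \<le> C * W"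
        using good[of t] gt yy(2) unfolding goodC_def W_def by blast
      moreover then have "mu (\<lambda>x. \<Sum>i=1..k. a i * x powr \<alpha> i) y = ereal (1 + \<bar>gd (ln y) / g (ln y)\<bar>)"
        using mu_eq[OF yy(1), of k a \<alpha>] unfolding g_def gd_def I_def by simp
      ultimately show "mu (\<lambda>x. \<Sum>i=1..k. a i * x powr \<alpha> i) y \<le> ereal C * mu (\<lambda>x. \<Sum>i=1..k. a i * x powr \<alpha> i) x"
        using mux by simp
  qed
qed

end
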